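(* Let $n\ge1$ and let $\mathbb{F}$ be any field. Then $\mathrm{Der}_{\mathrm{inn}}(\mathbb{F}(SD_{8n}))$ has dimension $3(2n-1)$ over $\mathbb{F}$ if $n$ is even and $6(n-1)$ if $n$ is odd. Moreover: (i) if $n$ is even, an $\mathbb{F}$-basis is $\{d_g\mid g\in\{a^{2k}\mid1\le k\le n-1\}\cup\{a^{2k+1}\mid -\frac n2\le k\le\frac n2-1\}\cup\{a^{2k}b,\ a^{2k-1}b\mid 1\le k\le 2n-1\}\}$; (ii) if $n$ is odd, an $\mathbb{F}$-basis is $\{d_g\mid g\in\{a^{2k}\mid1\le k\le n-1\}\cup\{a^{2k+1}\mid -\frac{n-1}2\le k\le\frac{n-1}2-1\}\cup\{a^{4k}b,\ a^{4k+1}b,\ a^{4k+2}b,\ a^{4k+3}b\mid 1\le k\le n-1\}\}$.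
   Context: $SD_{8n}=\langle a,b\mid a^{4n}=b^2=1,\ bab=a^{2n-1}\rangle$ is the semi-dihedral group of order $8n$ (exponents of $a$ modulo $4n$); $\mathbb{F}(SD_{8n})$ is its group algebra. For $\beta$ in the group algebra, the inner derivation $d_\beta$ is $d_\beta(\alpha)=\alpha\beta-\beta\alpha$; $\mathrm{Der}_{\mathrm{inn}}(\mathbb{F}(SD_{8n}))=\{d_\beta\}$, an $\mathbb{F}$-vector space. *)

theory Defs
  imports Complex_Main "HOL-Library.Function_Algebras"
begin

text \<open>The semi-dihedral group SD_{8n}: the element a^i b^e (0 <= i < 4n, e in {0,1})
  is encoded as the pair (i, e).  Since b a^j = a^{j(2n-1)} b, the product is
  a^i b^e * a^j b^f = a^{i + j (2n-1)^e} b^{e+f}.\<close>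

definition sd_carrier :: "nat \<Rightarrow> (nat \<times> nat) set" where
  "sd_carrier n = {(i, e). i < 4 * n \<and> e < 2}"

definition sd_mult :: "nat \<Rightarrow> nat \<times> nat \<Rightarrow> nat \<times> nat \<Rightarrow> nat \<times> nat" where
  "sd_mult n x y = ((fst x + fst y * (2 * n - 1) ^ snd x) mod (4 * n),
                    (snd x + snd y) mod 2)"

definition sd_a :: "nat \<Rightarrow> int \<Rightarrow> nat \<times> nat" where
  "sd_a n k = (nat (k mod (4 * int n)), 0)"

definition sd_ab :: "nat \<Rightarrow> int \<Rightarrow> nat \<times> nat" where
  "sd_ab n k = (nat (k mod (4 * int n)), 1)"

definition grp_alg :: "nat \<Rightarrow> (nat \<times> nat \<Rightarrow> 'a::field) set" where
  "grp_alg n = {\<alpha>. \<forall>g. g \<notin> sd_carrier n \<longrightarrow> \<alpha> g = 0}"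

definition ga_mult :: "nat \<Rightarrow> (nat \<times> nat \<Rightarrow> 'a::field) \<Rightarrow> (nat \<times> nat \<Rightarrow> 'a) \<Rightarrow> (nat \<times> nat \<Rightarrow> 'a)" where
  "ga_mult n \<alpha> \<beta> = (\<lambda>g. if g \<in> sd_carrier n then
      (\<Sum>h\<in>sd_carrier n. \<Sum>k\<in>sd_carrier n. if sd_mult n h k = g then \<alpha> h * \<beta> k else 0)
    else 0)"

definition ga_elem :: "nat \<times> nat \<Rightarrow> (nat \<times> nat \<Rightarrow> 'a::field)" where
  "ga_elem g = (\<lambda>h. if h = g then 1 else 0)"

definition inn_der :: "nat \<Rightarrow> (nat \<times> nat \<Rightarrow> 'a::field) \<Rightarrow> (nat \<times> nat \<Rightarrow> 'a) \<Rightarrow> (nat \<times> nat \<Rightarrow> 'a)" where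
  "inn_der n \<beta> = (\<lambda>\<alpha>. ga_mult n \<alpha> \<beta> - ga_mult n \<beta> \<alpha>)"

definition Der_inn :: "nat \<Rightarrow> ((nat \<times> nat \<Rightarrow> 'a::field) \<Rightarrow> (nat \<times> nat \<Rightarrow> 'a)) set" where
  "Der_inn n = inn_der n ` grp_alg n"

definition der_scale :: "'a::field \<Rightarrow> ((nat \<times> nat \<Rightarrow> 'a) \<Rightarrow> (nat \<times> nat \<Rightarrow> 'a)) \<Rightarrow> ((nat \<times> nat \<Rightarrow> 'a) \<Rightarrow> (nat \<times> nat \<Rightarrow> 'a))" where
  "der_scale c D = (\<lambda>\<alpha> g. c * D \<alpha> g)"

definition basis_even :: "nat \<Rightarrow> (nat \<times> nat) set" where
  "basis_even n =
     {sd_a n (2 * k) | k. 1 \<le> k \<and> k \<le> int n - 1}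
   \<union> {sd_a n (2 * k + 1) | k. - (int n div 2) \<le> k \<and> k \<le> int n div 2 - 1}
   \<union> {sd_ab n (2 * k) | k. 1 \<le> k \<and> k \<le> 2 * int n - 1}
   \<union> {sd_ab n (2 * k - 1) | k. 1 \<le> k \<and> k \<le> 2 * int n - 1}"

definition basis_odd :: "nat \<Rightarrow> (nat \<times> nat) set" where
  "basis_odd n =
     {sd_a n (2 * k) | k. 1 \<le> k \<and> k \<le> int n - 1}
   \<union> {sd_a n (2 * k + 1) | k. - ((int n - 1) div 2) \<le> k \<and> k \<le> (int n - 1) div 2 - 1}
   \<union> {sd_ab n (4 * k + j) | k j. 1 \<le> k \<and> k \<le> int n - 1 \<and> j \<in> {0, 1, 2, 3}}"

end

theory Submission
  imports Defs "HOL-Number_Theory.Cong"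
begin


lemma vs_der: "vector_space (der_scale :: 'a::field \<Rightarrow> ((nat \<times> nat \<Rightarrow> 'a) \<Rightarrow> (nat \<times> nat \<Rightarrow> 'a)) \<Rightarrow> _)"
  by unfold_locales (auto simp: der_scale_def fun_eq_iff algebra_simps)

lemma sum_fun_apply: "(sum F S) x = sum (\<lambda>i. F i x) S"
  by (induction S rule: infinite_finite_induct) auto

lemma u_sq: fixes n :: nat assumes "n \<ge> 1" shows "((2*n-1)^2) mod (4*n) = 1"
proof -
  obtain m where "n = Suc m" using assms by (cases n) auto
  then have "(2*n-1)^2 = 1 + m * (4*n)" by (simp add: power2_eq_square algebra_simps)
  moreover have "(1 + m * (4*n)) mod (4*n) = 1 mod (4*n)" by (rule mod_mult_self1)
  ultimately show ?thesis using assms by simp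
qed

lemma u_cop: fixes n :: nat assumes "n \<ge> 1" shows "coprime (2*n-1) (4*n)"
proof -
  obtain m where n: "n = Suc m" using assms by (cases n) auto
  have "coprime (2*m+1) (4*m+4)"
  proof (rule coprimeI)
    fix d assume "d dvd 2*m+1" "d dvd 4*m+4"
    then have "d dvd (4*m+4) - 2*(2*m+1)" by (meson dvd_diff_nat dvd_mult)
    then have "d dvd 2" by simp
    moreover have "odd d"
    proof
      assume "even d" then have "2 dvd 2*m+1" using \<open>d dvd 2*m+1\<close> dvd_trans by blast
      then show False by simp
    qed
    moreover have "d \<le> 2" using \<open>d dvd 2\<close> by (simp add: dvd_imp_le)
    ultimately show "is_unit d" using \<open>d dvd 2\<close> by (cases d) (auto simp: less_Suc_eq_le le_Suc_eq)
  qed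
  then show ?thesis using n by (simp add: algebra_simps)
qed

lemma sd_closed: "n \<ge> 1 \<Longrightarrow> sd_mult n x y \<in> sd_carrier n"
  by (simp add: sd_mult_def sd_carrier_def)

lemma sd_lcancel:
  assumes n: "n \<ge> 1" and h: "h \<in> sd_carrier n" and k: "k \<in> sd_carrier n" and k': "k' \<in> sd_carrier n"
    and eq: "sd_mult n h k = sd_mult n h k'"
  shows "k = k'"
proof -
  obtain i e where he: "h = (i,e)" by fastforce
  obtain j f where kf: "k = (j,f)" by fastforce
  obtain j' f' where kf': "k' = (j',f')" by fastforce
  from eq have e1: "(i + j*(2*n-1)^e) mod (4*n) = (i + j'*(2*n-1)^e) mod (4*n)"
    and e2: "(e+f) mod 2 = (e+f') mod 2" by (simp_all add: sd_mult_def he kf kf')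
  from e2 k k' have "f = f'" by (auto simp: sd_carrier_def kf kf') presburger
  from e1 have "[i + j*(2*n-1)^e = i + j'*(2*n-1)^e] (mod (4*n))" by (simp add: cong_def)
  then have "[j*(2*n-1)^e = j'*(2*n-1)^e] (mod (4*n))" by (simp add: cong_add_lcancel_nat)
  moreover have "coprime ((2*n-1)^e) (4*n)" using u_cop[OF n] by simp
  ultimately have "[j = j'] (mod (4*n))" using cong_mult_rcancel_nat by blast
  then have "j = j'" using k k' by (auto simp: sd_carrier_def kf kf' intro: cong_less_modulus_unique_nat)
  with \<open>f = f'\<close> show ?thesis by (simp add: kf kf')
qed

lemma sd_rcancel:
  assumes n: "n \<ge> 1" and h: "h \<in> sd_carrier n" and h': "h' \<in> sd_carrier n" and k: "k \<in> sd_carrier n"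
    and eq: "sd_mult n h k = sd_mult n h' k"
  shows "h = h'"
proof -
  obtain i e where he: "h = (i,e)" by fastforce
  obtain i' e' where he': "h' = (i',e')" by fastforce
  obtain j f where kf: "k = (j,f)" by fastforce
  from eq have e2: "(e+f) mod 2 = (e'+f) mod 2" by (simp_all add: sd_mult_def he he' kf)
  from e2 h h' have "e = e'" by (auto simp: sd_carrier_def he he') presburger
  from eq have e1: "(i + j*(2*n-1)^e) mod (4*n) = (i' + j*(2*n-1)^e) mod (4*n)"
    by (simp add: sd_mult_def he he' kf \<open>e = e'\<close>)
  then have "[i + j*(2*n-1)^e = i' + j*(2*n-1)^e] (mod (4*n))" by (simp add: cong_def)
  then have "[i = i'] (mod (4*n))" by (simp add: cong_add_rcancel_nat)
  then have "i = i'" using h h' by (auto simp: sd_carrier_def he he' intro: cong_less_modulus_unique_nat)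
  with \<open>e = e'\<close> show ?thesis by (simp add: he he')
qed

lemma finite_G: "finite (sd_carrier n)"
proof -
  have "sd_carrier n \<subseteq> {..<4*n} \<times> {..<2}" by (auto simp: sd_carrier_def)
  then show ?thesis by (rule finite_subset) auto
qed

lemma sd_ldiv:
  assumes n: "n \<ge> 1" and h: "h \<in> sd_carrier n" and x: "x \<in> sd_carrier n"
  shows "\<exists>k\<in>sd_carrier n. sd_mult n h k = x"
proof -
  have "inj_on (sd_mult n h) (sd_carrier n)"
    unfolding inj_on_def using sd_lcancel[OF n h] by blast
  then have "sd_mult n h ` sd_carrier n = sd_carrier n"
    by (intro endo_inj_surj[OF finite_G]) (use sd_closed[OF n] in blast)
  with x show ?thesis by (metis imageE)
qed

lemma sd_rdiv:
  assumes n: "n \<ge> 1" and h: "h \<in> sd_carrier n" and x: "x \<in> sd_carrier n"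
  shows "\<exists>k\<in>sd_carrier n. sd_mult n k h = x"
proof -
  have "inj_on (\<lambda>k. sd_mult n k h) (sd_carrier n)"
    unfolding inj_on_def using sd_rcancel[OF n _ _ h] by blast
  then have "(\<lambda>k. sd_mult n k h) ` sd_carrier n = sd_carrier n"
    by (intro endo_inj_surj[OF finite_G]) (use sd_closed[OF n] in blast)
  with x show ?thesis by (metis imageE)
qed

abbreviation "G n \<equiv> sd_carrier n"

lemma lsum:
  assumes n: "n \<ge> 1" and h: "h \<in> G n" and k: "k \<in> G n" and x: "sd_mult n h k = x"
  shows "(\<Sum>k'\<in>G n. if sd_mult n h k' = x then f k' else 0) = f k"
proof -
  have "(\<Sum>k'\<in>G n. if sd_mult n h k' = x then f k' else 0) = (\<Sum>k'\<in>G n. if k' = k then f k' else 0)"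
  proof (intro sum.cong refl)
    fix k' assume "k' \<in> G n"
    then have "sd_mult n h k' = x \<longleftrightarrow> k' = k" using sd_lcancel[OF n h _ k] x by metis
    then show "(if sd_mult n h k' = x then f k' else 0) = (if k' = k then f k' else 0)" by simp
  qed
  also have "\<dots> = f k" using k finite_G by simp
  finally show ?thesis .
qed

lemma rsum:
  assumes n: "n \<ge> 1" and h: "h \<in> G n" and k: "k \<in> G n" and x: "sd_mult n k h = x"
  shows "(\<Sum>k'\<in>G n. if sd_mult n k' h = x then f k' else 0) = f k"
proof -
  have "(\<Sum>k'\<in>G n. if sd_mult n k' h = x then f k' else 0) = (\<Sum>k'\<in>G n. if k' = k then f k' else 0)"
  proof (intro sum.cong refl)
    fix k' assume "k' \<in> G n"
    then have "sd_mult n k' h = x \<longleftrightarrow> k' = k" using sd_rcancel[OF n _ k h] x by metis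
    then show "(if sd_mult n k' h = x then f k' else 0) = (if k' = k then f k' else 0)" by simp
  qed
  also have "\<dots> = f k" using k finite_G by simp
  finally show ?thesis .
qed


lemma ga_mult_elem_r:
  assumes g: "g \<in> G n"
  shows "ga_mult n \<alpha> (ga_elem g) x = (if x \<in> G n then (\<Sum>h\<in>G n. if sd_mult n h g = x then \<alpha> h else 0) else 0)"
proof -
  have "\<And>h. (\<Sum>k\<in>G n. if sd_mult n h k = x then \<alpha> h * ga_elem g k else 0) = (\<Sum>k\<in>G n. if k = g then (if sd_mult n h g = x then \<alpha> h else 0) else 0)"
    by (intro sum.cong) (auto simp: ga_elem_def)
  then show ?thesis using g finite_G by (simp add: ga_mult_def)
qed

lemma ga_mult_elem_l:
  assumes g: "g \<in> G n"
  shows "ga_mult n (ga_elem g) \<alpha> x = (if x \<in> G n then (\<Sum>k\<in>G n. if sd_mult n g k = x then \<alpha> k else 0) else 0)"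
proof -
  have "\<And>h. (\<Sum>k\<in>G n. if sd_mult n h k = x then ga_elem g h * \<alpha> k else 0) = (if h = g then (\<Sum>k\<in>G n. if sd_mult n g k = x then \<alpha> k else 0) else 0)"
    by (simp add: ga_elem_def cong: if_cong)
  then have "(\<Sum>h\<in>G n. \<Sum>k\<in>G n. if sd_mult n h k = x then ga_elem g h * \<alpha> k else 0) = (\<Sum>h\<in>G n. if h = g then (\<Sum>k\<in>G n. if sd_mult n g k = x then \<alpha> k else 0) else 0)"
    by simp
  then show ?thesis using g finite_G by (simp add: ga_mult_def)
qed

lemma central_inv:
  assumes n: "n \<ge> 1" and z: "inn_der n \<beta> = 0" and h: "h \<in> G n" and y: "y \<in> G n" and y': "y' \<in> G n"
    and eq: "sd_mult n y' h = sd_mult n h y"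
  shows "\<beta> y = \<beta> y'"
proof -
  have "inn_der n \<beta> (ga_elem h) = 0" using z by simp
  then have E: "ga_mult n (ga_elem h) \<beta> = ga_mult n \<beta> (ga_elem h)" by (simp add: inn_der_def)
  define x where "x = sd_mult n h y"
  have x: "x \<in> G n" using sd_closed[OF n] x_def by simp
  have "ga_mult n (ga_elem h) \<beta> x = \<beta> y"
    using ga_mult_elem_l[OF h, of \<beta> x] x lsum[OF n h y x_def[symmetric], of \<beta>] by simp
  moreover have "ga_mult n \<beta> (ga_elem h) x = \<beta> y'"
    using ga_mult_elem_r[OF h, of \<beta> x] x rsum[OF n h y', of x \<beta>] eq x_def by simp
  ultimately show ?thesis using E by simp
qed


lemma mult_if0: "(c::'a::comm_ring_1) * (if P then a else 0) = (if P then a * c else 0)" by simp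
lemma mult_if0': "(c::'a::comm_ring_1) * (if P then a else 0) = (if P then c * a else 0)" by simp

lemma lin_r: "(\<Sum>g\<in>G n. c g * ga_mult n \<alpha> (ga_elem g) x) = ga_mult n \<alpha> c x"
proof (cases "x \<in> G n")
  case True
  have "(\<Sum>g\<in>G n. c g * ga_mult n \<alpha> (ga_elem g) x) = (\<Sum>g\<in>G n. \<Sum>h\<in>G n. if sd_mult n h g = x then \<alpha> h * c g else 0)"
  proof (rule sum.cong[OF refl])
    fix g assume g: "g \<in> G n"
    show "c g * ga_mult n \<alpha> (ga_elem g) x = (\<Sum>h\<in>G n. if sd_mult n h g = x then \<alpha> h * c g else 0)"
      unfolding ga_mult_elem_r[OF g] using True by (simp add: sum_distrib_left mult_if0)
  qed
  also have "\<dots> = (\<Sum>h\<in>G n. \<Sum>g\<in>G n. if sd_mult n h g = x then \<alpha> h * c g else 0)"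
    by (rule sum.swap)
  also have "\<dots> = ga_mult n \<alpha> c x" using True by (simp add: ga_mult_def)
  finally show ?thesis .
qed (simp add: ga_mult_def)

lemma lin_l: "(\<Sum>g\<in>G n. c g * ga_mult n (ga_elem g) \<alpha> x) = ga_mult n c \<alpha> x"
proof (cases "x \<in> G n")
  case True
  have "(\<Sum>g\<in>G n. c g * ga_mult n (ga_elem g) \<alpha> x) = (\<Sum>g\<in>G n. \<Sum>k\<in>G n. if sd_mult n g k = x then c g * \<alpha> k else 0)"
  proof (rule sum.cong[OF refl])
    fix g assume g: "g \<in> G n"
    show "c g * ga_mult n (ga_elem g) \<alpha> x = (\<Sum>k\<in>G n. if sd_mult n g k = x then c g * \<alpha> k else 0)"
      unfolding ga_mult_elem_l[OF g] using True by (simp add: sum_distrib_left mult_if0')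
  qed
  also have "\<dots> = ga_mult n c \<alpha> x" using True by (simp add: ga_mult_def)
  finally show ?thesis .
qed (simp add: ga_mult_def)

lemma inn_lin: "inn_der n \<beta> = (\<Sum>g\<in>G n. der_scale (\<beta> g) (inn_der n (ga_elem g)))"
proof (intro ext)
  fix \<alpha> x
  have "(\<Sum>g\<in>G n. der_scale (\<beta> g) (inn_der n (ga_elem g))) \<alpha> x
      = (\<Sum>g\<in>G n. \<beta> g * ga_mult n \<alpha> (ga_elem g) x - \<beta> g * ga_mult n (ga_elem g) \<alpha> x)"
    by (simp add: sum_fun_apply der_scale_def inn_der_def right_diff_distrib)
  also have "\<dots> = (\<Sum>g\<in>G n. \<beta> g * ga_mult n \<alpha> (ga_elem g) x) - (\<Sum>g\<in>G n. \<beta> g * ga_mult n (ga_elem g) \<alpha> x)"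
    by (rule sum_subtractf)
  also have "\<dots> = inn_der n \<beta> \<alpha> x" by (simp add: lin_r lin_l inn_der_def)
  finally show "inn_der n \<beta> \<alpha> x = (\<Sum>g\<in>G n. der_scale (\<beta> g) (inn_der n (ga_elem g))) \<alpha> x" by simp
qed

lemma inn_add: "inn_der n (\<beta>1 + \<beta>2) = inn_der n \<beta>1 + inn_der n \<beta>2"
proof -
  note e = inn_lin[of n "\<beta>1 + \<beta>2"] inn_lin[of n \<beta>1] inn_lin[of n \<beta>2]
  show ?thesis unfolding e
    by (simp add: fun_eq_iff sum_fun_apply der_scale_def distrib_right sum.distrib)
qed

lemma inn_scale: "der_scale c (inn_der n \<beta>) = inn_der n (\<lambda>x. c * \<beta> x)"
proof -
  note e = inn_lin[of n "\<lambda>x. c * \<beta> x"] inn_lin[of n \<beta>]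
  show ?thesis unfolding e
    by (simp add: fun_eq_iff sum_fun_apply der_scale_def sum_distrib_left mult.assoc)
qed

lemma inn_zero: "inn_der n 0 = 0"
  by (simp add: fun_eq_iff inn_der_def ga_mult_def cong: if_cong)

lemma Der_subspace: "module.subspace der_scale (Der_inn n :: ((nat \<times> nat \<Rightarrow> 'a::field) \<Rightarrow> _) set)"
proof -
  interpret V: vector_space "der_scale :: 'a \<Rightarrow> ((nat \<times> nat \<Rightarrow> 'a) \<Rightarrow> (nat \<times> nat \<Rightarrow> 'a)) \<Rightarrow> _" by (rule vs_der)
  show ?thesis
  proof (rule V.subspaceI)
    show "0 \<in> Der_inn n" unfolding Der_inn_def grp_alg_def
      by (rule image_eqI[of _ _ 0]) (auto simp: inn_zero)
  next
    fix x y :: "(nat \<times> nat \<Rightarrow> 'a) \<Rightarrow> (nat \<times> nat \<Rightarrow> 'a)" assume "x \<in> Der_inn n" "y \<in> Der_inn n"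
    then obtain b1 b2 where "b1 \<in> grp_alg n" "b2 \<in> grp_alg n" "x = inn_der n b1" "y = inn_der n b2"
      by (auto simp: Der_inn_def)
    then show "x + y \<in> Der_inn n" unfolding Der_inn_def
      by (intro image_eqI[of _ _ "b1 + b2"]) (auto simp: inn_add grp_alg_def)
  next
    fix c and x :: "(nat \<times> nat \<Rightarrow> 'a) \<Rightarrow> (nat \<times> nat \<Rightarrow> 'a)" assume "x \<in> Der_inn n"
    then obtain b1 where "b1 \<in> grp_alg n" "x = inn_der n b1"
      by (auto simp: Der_inn_def)
    then show "der_scale c x \<in> Der_inn n" unfolding Der_inn_def
      by (intro image_eqI[of _ _ "\<lambda>x. c * b1 x"]) (auto simp: inn_scale grp_alg_def)
  qed
qed

lemma class_sum:
  assumes n: "n \<ge> 1" and S: "S \<subseteq> G n"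
    and inv: "\<And>a b c. a \<in> G n \<Longrightarrow> b \<in> G n \<Longrightarrow> c \<in> G n \<Longrightarrow> sd_mult n a b = sd_mult n c a \<Longrightarrow> (b \<in> S \<longleftrightarrow> c \<in> S)"
  shows "(\<Sum>s\<in>S. inn_der n (ga_elem s :: nat \<times> nat \<Rightarrow> 'a::field)) = 0"
proof -
  define z :: "nat \<times> nat \<Rightarrow> 'a" where "z = (\<lambda>x. if x \<in> S then 1 else 0)"
  have "inn_der n z = (\<Sum>g\<in>G n. der_scale (z g) (inn_der n (ga_elem g)))" by (rule inn_lin)
  also have "\<dots> = (\<Sum>g\<in>G n. if g \<in> S then inn_der n (ga_elem g) else 0)"
    by (intro sum.cong refl) (simp add: z_def der_scale_def zero_fun_def)
  also have "\<dots> = (\<Sum>g\<in>S. inn_der n (ga_elem g))"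
    using S finite_G by (simp add: sum.If_cases Int_absorb1)
  finally have E: "inn_der n z = (\<Sum>g\<in>S. inn_der n (ga_elem g))" .
  have "inn_der n z = 0"
  proof (intro ext)
    fix \<alpha> :: "nat \<times> nat \<Rightarrow> 'a" and x
    show "inn_der n z \<alpha> x = 0 \<alpha> x"
    proof (cases "x \<in> G n")
      case False then show ?thesis by (simp add: inn_der_def ga_mult_def)
    next
      case True
      have L: "ga_mult n \<alpha> z x = (\<Sum>h\<in>G n. \<Sum>k\<in>G n. if sd_mult n h k = x then \<alpha> h * z k else 0)"
        using True by (simp add: ga_mult_def)
      have R: "ga_mult n z \<alpha> x = (\<Sum>h\<in>G n. \<Sum>k\<in>G n. if sd_mult n k h = x then z k * \<alpha> h else 0)"
      proof -
        have "ga_mult n z \<alpha> x = (\<Sum>k\<in>G n. \<Sum>h\<in>G n. if sd_mult n k h = x then z k * \<alpha> h else 0)"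
          using True by (simp add: ga_mult_def)
        also have "\<dots> = (\<Sum>h\<in>G n. \<Sum>k\<in>G n. if sd_mult n k h = x then z k * \<alpha> h else 0)"
          by (rule sum.swap)
        finally show ?thesis .
      qed
      have "(\<Sum>k\<in>G n. if sd_mult n h k = x then \<alpha> h * z k else 0) = (\<Sum>k\<in>G n. if sd_mult n k h = x then z k * \<alpha> h else 0)"
        if h: "h \<in> G n" for h
      proof -
        obtain k1 where k1: "k1 \<in> G n" "sd_mult n h k1 = x" using sd_ldiv[OF n h True] by blast
        obtain k2 where k2: "k2 \<in> G n" "sd_mult n k2 h = x" using sd_rdiv[OF n h True] by blast
        have "z k1 = z k2" using inv[OF h k1(1) k2(1)] k1(2) k2(2) by (simp add: z_def)
        then show ?thesis
          using lsum[OF n h k1(1) k1(2), of "\<lambda>k. \<alpha> h * z k"] rsum[OF n h k2(1) k2(2), of "\<lambda>k. z k * \<alpha> h"]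
          by (simp add: mult.commute)
      qed
      then show ?thesis using L R by (simp add: inn_der_def)
    qed
  qed
  with E show ?thesis by simp
qed

lemma span_from_class:
  assumes vs: "vector_space (scale :: 'a::field \<Rightarrow> 'b::ab_group_add \<Rightarrow> 'b)"
    and fin: "finite S" and t: "t \<in> S" and z: "(\<Sum>s\<in>S. D s) = 0" and sub: "S - {t} \<subseteq> B"
  shows "D t \<in> module.span scale (D ` B)"
proof -
  interpret V: vector_space scale by (rule vs)
  have "(\<Sum>s\<in>S. D s) = D t + (\<Sum>s\<in>S - {t}. D s)" using fin t by (rule sum.remove)
  then have "D t = - (\<Sum>s\<in>S - {t}. D s)" using z by (simp add: eq_neg_iff_add_eq_0)
  also have "\<dots> \<in> V.span (D ` B)"
    by (intro V.span_neg V.span_sum V.span_base) (use sub in auto)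
  finally show ?thesis .
qed

lemma assemble:
  fixes B :: "(nat \<times> nat) set" and n :: nat
  assumes n: "n \<ge> 1" and BG: "B \<subseteq> G n"
   and KEY: "\<And>(\<beta>::nat \<times> nat \<Rightarrow> 'a::field) x. inn_der n \<beta> = 0 \<Longrightarrow> (\<And>x. x \<notin> B \<Longrightarrow> \<beta> x = 0) \<Longrightarrow> x \<in> B \<Longrightarrow> \<beta> x = 0"
   and SP: "\<And>t. t \<in> G n \<Longrightarrow> t \<notin> B \<Longrightarrow> inn_der n (ga_elem t :: nat \<times> nat \<Rightarrow> 'a) \<in> module.span der_scale ((\<lambda>g. inn_der n (ga_elem g :: nat \<times> nat \<Rightarrow> 'a)) ` B)"
  shows "\<not> module.dependent (der_scale :: 'a \<Rightarrow> _) ((\<lambda>g. inn_der n (ga_elem g :: nat \<times> nat \<Rightarrow> 'a)) ` B)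
     \<and> module.span (der_scale :: 'a \<Rightarrow> _) ((\<lambda>g. inn_der n (ga_elem g :: nat \<times> nat \<Rightarrow> 'a)) ` B) = Der_inn n
     \<and> vector_space.dim (der_scale :: 'a \<Rightarrow> _) (Der_inn n :: (_ \<Rightarrow> (nat \<times> nat \<Rightarrow> 'a)) set) = card B"
proof -
  interpret V: vector_space "der_scale :: 'a \<Rightarrow> ((nat \<times> nat \<Rightarrow> 'a) \<Rightarrow> (nat \<times> nat \<Rightarrow> 'a)) \<Rightarrow> _" by (rule vs_der)
  define D where "D g = inn_der n (ga_elem g :: nat \<times> nat \<Rightarrow> 'a)" for g
  have finB: "finite B" using BG finite_G finite_subset by blast
  have inj: "inj_on D B"
  proof (rule inj_onI, rule ccontr)
    fix g h assume g: "g \<in> B" and h: "h \<in> B" and eq: "D g = D h" and ne: "g \<noteq> h"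
    define \<beta> :: "nat \<times> nat \<Rightarrow> 'a" where "\<beta> = ga_elem g + (\<lambda>x. (-1) * ga_elem h x)"
    have "inn_der n \<beta> = D g + der_scale (-1) (D h)"
      unfolding \<beta>_def D_def by (simp add: inn_add inn_scale)
    also have "\<dots> = 0" using eq by (simp add: fun_eq_iff der_scale_def)
    finally have z: "inn_der n \<beta> = 0" .
    have "\<beta> g = 0" by (rule KEY[OF z _ g]) (use g h in \<open>auto simp: \<beta>_def ga_elem_def\<close>)
    moreover have "\<beta> g = 1" using ne by (simp add: \<beta>_def ga_elem_def)
    ultimately show False by simp
  qed
  have indep: "\<not> V.dependent (D ` B)"
  proof
    assume "V.dependent (D ` B)"
    then obtain T u where T: "finite T" "T \<subseteq> D ` B" and s0: "(\<Sum>v\<in>T. der_scale (u v) v) = 0"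
      and v: "\<exists>v\<in>T. u v \<noteq> 0" unfolding V.dependent_explicit by blast
    define B' where "B' = {g \<in> B. D g \<in> T}"
    have TB': "T = D ` B'" using T unfolding B'_def by blast
    have injB': "inj_on D B'" using inj by (rule inj_on_subset) (auto simp: B'_def)
    have B'G: "B' \<subseteq> G n" using BG by (auto simp: B'_def)
    define \<beta> :: "nat \<times> nat \<Rightarrow> 'a" where "\<beta> g = (if g \<in> B' then u (D g) else 0)" for g
    have "inn_der n \<beta> = (\<Sum>g\<in>G n. der_scale (\<beta> g) (D g))" unfolding D_def by (rule inn_lin)
    also have "\<dots> = (\<Sum>g\<in>G n. if g \<in> B' then der_scale (u (D g)) (D g) else 0)"
      by (intro sum.cong refl) (simp add: \<beta>_def der_scale_def zero_fun_def)
    also have "\<dots> = (\<Sum>g\<in>B'. der_scale (u (D g)) (D g))"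
      using B'G finite_G by (simp add: sum.If_cases Int_absorb1)
    also have "\<dots> = (\<Sum>v\<in>T. der_scale (u v) v)"
      unfolding TB' using sum.reindex[OF injB', of "\<lambda>v. der_scale (u v) v"] by simp
    also have "\<dots> = 0" by (rule s0)
    finally have z: "inn_der n \<beta> = 0" .
    from v obtain w where w: "w \<in> T" "u w \<noteq> 0" by blast
    then obtain g where g: "g \<in> B'" "w = D g" using TB' by blast
    have "\<beta> g = 0" by (rule KEY[OF z]) (use g in \<open>auto simp: \<beta>_def B'_def\<close>)
    then show False using g w by (simp add: \<beta>_def)
  qed
  have sub: "V.subspace (Der_inn n :: (_ \<Rightarrow> (nat \<times> nat \<Rightarrow> 'a)) set)" by (rule Der_subspace)
  have span: "V.span (D ` B) = Der_inn n"
  proof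
    show "V.span (D ` B) \<subseteq> Der_inn n"
    proof (rule V.span_minimal[OF _ sub])
      show "D ` B \<subseteq> Der_inn n" using BG
        by (auto simp: D_def Der_inn_def grp_alg_def ga_elem_def)
    qed
  next
    show "Der_inn n \<subseteq> V.span (D ` B)"
    proof
      fix y :: "(nat \<times> nat \<Rightarrow> 'a) \<Rightarrow> (nat \<times> nat \<Rightarrow> 'a)" assume "y \<in> Der_inn n"
      then obtain \<beta> :: "nat \<times> nat \<Rightarrow> 'a" where y: "y = inn_der n \<beta>" by (auto simp: Der_inn_def)
      have "y = (\<Sum>g\<in>G n. der_scale (\<beta> g) (D g))" unfolding y D_def by (rule inn_lin)
      also have "\<dots> \<in> V.span (D ` B)"
      proof (intro V.span_sum V.span_scale)
        fix g assume g: "g \<in> G n"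
        show "D g \<in> V.span (D ` B)"
        proof (cases "g \<in> B")
          case True then show ?thesis by (intro V.span_base) auto
        next
          case False then show ?thesis using SP[OF g] by (simp add: D_def)
        qed
      qed
      finally show "y \<in> V.span (D ` B)" .
    qed
  qed
  have "V.dim (Der_inn n) = card (D ` B)"
  proof (rule V.dim_eq_card)
    have spD: "V.span (Der_inn n) = Der_inn n" using sub by (simp only: V.span_eq_iff)
    show "V.span (D ` B) = V.span (Der_inn n)" by (simp only: spD span)
    show "V.independent (D ` B)" by (rule indep)
  qed
  also have "\<dots> = card B" using inj by (rule card_image)
  finally show ?thesis using indep span by (simp add: D_def)
qed



lemma sd_a_pos: "0 \<le> z \<Longrightarrow> z < 4 * int n \<Longrightarrow> sd_a n z = (nat z, 0)"
  by (simp add: sd_a_def)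
lemma sd_ab_pos: "0 \<le> z \<Longrightarrow> z < 4 * int n \<Longrightarrow> sd_ab n z = (nat z, 1)"
  by (simp add: sd_ab_def)
lemma sd_a_neg: "z < 0 \<Longrightarrow> - (4 * int n) \<le> z \<Longrightarrow> sd_a n z = (nat (z + 4 * int n), 0)"
proof -
  assume a: "z < 0" "- (4 * int n) \<le> z"
  have "z mod (4 * int n) = (z + 4 * int n) mod (4 * int n)" by simp
  also have "\<dots> = z + 4 * int n" using a by (intro mod_pos_pos_trivial) auto
  finally show ?thesis by (simp add: sd_a_def)
qed

lemma P1: "{sd_a n (2 * k) | k. 1 \<le> k \<and> k \<le> int n - 1} = {(i, 0::nat) | i. even i \<and> 2 \<le> i \<and> i + 2 \<le> 2 * n}"
proof (intro set_eqI iffI)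
  fix x assume "x \<in> {sd_a n (2 * k) | k. 1 \<le> k \<and> k \<le> int n - 1}"
  then obtain k where k: "1 \<le> k" "k \<le> int n - 1" "x = sd_a n (2 * k)" by blast
  then have "x = (nat (2 * k), 0)" by (simp add: sd_a_pos)
  moreover have "nat (2 * k) = 2 * nat k" by simp
  ultimately show "x \<in> {(i, 0::nat) | i. even i \<and> 2 \<le> i \<and> i + 2 \<le> 2 * n}" using k by auto
next
  fix x assume "x \<in> {(i, 0::nat) | i. even i \<and> 2 \<le> i \<and> i + 2 \<le> 2 * n}"
  then obtain i where i: "x = (i, 0)" "even i" "2 \<le> i" "i + 2 \<le> 2 * n" by blast
  then obtain q where q: "i = 2 * q" by (auto elim: evenE)
  have "sd_a n (2 * int q) = (i, 0)" using i q by (subst sd_a_pos) auto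
  moreover have "1 \<le> int q" "int q \<le> int n - 1" using i q by auto
  ultimately show "x \<in> {sd_a n (2 * k) | k. 1 \<le> k \<and> k \<le> int n - 1}" using i by (auto intro!: exI[of _ "int q"])
qed

lemma P2e:
  assumes "even n"
  shows "{sd_a n (2 * k + 1) | k. - (int n div 2) \<le> k \<and> k \<le> int n div 2 - 1}
       = {(i, 0::nat) | i. odd i \<and> (i + 1 \<le> n \<or> (3 * n + 1 \<le> i \<and> i < 4 * n))}"
proof -
  obtain m where m: "n = 2 * m" using assms by (auto elim: evenE)
  have d: "int n div 2 = int m" using m by simp
  show ?thesis
  proof (intro set_eqI iffI)
    fix x assume "x \<in> {sd_a n (2 * k + 1) | k. - (int n div 2) \<le> k \<and> k \<le> int n div 2 - 1}"
    then obtain k where k: "- int m \<le> k" "k \<le> int m - 1" "x = sd_a n (2 * k + 1)" unfolding d by blast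
    show "x \<in> {(i, 0::nat) | i. odd i \<and> (i + 1 \<le> n \<or> (3 * n + 1 \<le> i \<and> i < 4 * n))}"
    proof (cases "k \<ge> 0")
      case True
      then have "x = (nat (2 * k + 1), 0)" using k m by (simp add: sd_a_pos)
      moreover have "nat (2 * k + 1) = 2 * nat k + 1" using True by simp
      ultimately show ?thesis using k m True by auto
    next
      case False
      then have "x = (nat (2 * k + 1 + 4 * int n), 0)" using k m by (simp add: sd_a_neg)
      moreover have "nat (2 * k + 1 + 4 * int n) = 2 * nat (k + 2 * int n) + 1" using False k m by simp
      ultimately show ?thesis using k m False by auto
    qed
  next
    fix x assume "x \<in> {(i, 0::nat) | i. odd i \<and> (i + 1 \<le> n \<or> (3 * n + 1 \<le> i \<and> i < 4 * n))}"
    then obtain i where i: "x = (i, 0)" "odd i" "i + 1 \<le> n \<or> (3 * n + 1 \<le> i \<and> i < 4 * n)" by blast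
    then obtain q where q: "i = 2 * q + 1" by (auto elim: oddE)
    show "x \<in> {sd_a n (2 * k + 1) | k. - (int n div 2) \<le> k \<and> k \<le> int n div 2 - 1}"
      unfolding d
    proof (cases "i + 1 \<le> n")
      case True
      have "sd_a n (2 * int q + 1) = (i, 0)" using i q True by (subst sd_a_pos) auto
      moreover have "- int m \<le> int q" "int q \<le> int m - 1" using True q m by auto
      ultimately show "x \<in> {sd_a n (2 * k + 1) | k. - int m \<le> k \<and> k \<le> int m - 1}" using i by (auto intro!: exI[of _ "int q"])
    next
      case False
      then have F: "3 * n + 1 \<le> i" "i < 4 * n" using i by auto
      have "sd_a n (2 * (int q - 2 * int n) + 1) = (i, 0)" using F q by (subst sd_a_neg) auto
      moreover have "- int m \<le> int q - 2 * int n" "int q - 2 * int n \<le> int m - 1" using F q m by auto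
      ultimately show "x \<in> {sd_a n (2 * k + 1) | k. - int m \<le> k \<and> k \<le> int m - 1}" using i by (auto intro!: exI[of _ "int q - 2 * int n"])
    qed
  qed
qed

lemma P3: "{sd_ab n (2 * k) | k. 1 \<le> k \<and> k \<le> 2 * int n - 1} = {(i, 1::nat) | i. even i \<and> 2 \<le> i \<and> i + 2 \<le> 4 * n}"
proof (intro set_eqI iffI)
  fix x assume "x \<in> {sd_ab n (2 * k) | k. 1 \<le> k \<and> k \<le> 2 * int n - 1}"
  then obtain k where k: "1 \<le> k" "k \<le> 2 * int n - 1" "x = sd_ab n (2 * k)" by blast
  then have "x = (nat (2 * k), 1)" by (simp add: sd_ab_pos)
  moreover have "nat (2 * k) = 2 * nat k" by simp
  ultimately show "x \<in> {(i, 1::nat) | i. even i \<and> 2 \<le> i \<and> i + 2 \<le> 4 * n}" using k by auto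
next
  fix x assume "x \<in> {(i, 1::nat) | i. even i \<and> 2 \<le> i \<and> i + 2 \<le> 4 * n}"
  then obtain i where i: "x = (i, 1)" "even i" "2 \<le> i" "i + 2 \<le> 4 * n" by blast
  then obtain q where q: "i = 2 * q" by (auto elim: evenE)
  have "sd_ab n (2 * int q) = (i, 1)" using i q by (subst sd_ab_pos) auto
  moreover have "1 \<le> int q" "int q \<le> 2 * int n - 1" using i q by auto
  ultimately show "x \<in> {sd_ab n (2 * k) | k. 1 \<le> k \<and> k \<le> 2 * int n - 1}" using i by (auto intro!: exI[of _ "int q"])
qed

lemma P4: "{sd_ab n (2 * k - 1) | k. 1 \<le> k \<and> k \<le> 2 * int n - 1} = {(i, 1::nat) | i. odd i \<and> i + 3 \<le> 4 * n}"
proof (intro set_eqI iffI)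
  fix x assume "x \<in> {sd_ab n (2 * k - 1) | k. 1 \<le> k \<and> k \<le> 2 * int n - 1}"
  then obtain k where k: "1 \<le> k" "k \<le> 2 * int n - 1" "x = sd_ab n (2 * k - 1)" by blast
  then have "x = (nat (2 * k - 1), 1)" by (simp add: sd_ab_pos)
  moreover have "nat (2 * k - 1) = 2 * nat (k - 1) + 1" using k by simp
  ultimately show "x \<in> {(i, 1::nat) | i. odd i \<and> i + 3 \<le> 4 * n}" using k by auto
next
  fix x assume "x \<in> {(i, 1::nat) | i. odd i \<and> i + 3 \<le> 4 * n}"
  then obtain i where i: "x = (i, 1)" "odd i" "i + 3 \<le> 4 * n" by blast
  then obtain q where q: "i = 2 * q + 1" by (auto elim: oddE)
  have "sd_ab n (2 * (int q + 1) - 1) = (i, 1)" using i q by (subst sd_ab_pos) auto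
  moreover have "1 \<le> int q + 1" "int q + 1 \<le> 2 * int n - 1" using i q by auto
  ultimately show "x \<in> {sd_ab n (2 * k - 1) | k. 1 \<le> k \<and> k \<le> 2 * int n - 1}" using i by (auto intro!: exI[of _ "int q + 1"])
qed

lemma P2o:
  assumes "odd n"
  shows "{sd_a n (2 * k + 1) | k. - ((int n - 1) div 2) \<le> k \<and> k \<le> (int n - 1) div 2 - 1}
       = {(i, 0::nat) | i. odd i \<and> (i + 2 \<le> n \<or> (3 * n + 2 \<le> i \<and> i < 4 * n))}"
proof -
  obtain m where m: "n = 2 * m + 1" using assms by (auto elim: oddE)
  have d: "(int n - 1) div 2 = int m" using m by simp
  show ?thesis
  proof (intro set_eqI iffI)
    fix x assume "x \<in> {sd_a n (2 * k + 1) | k. - ((int n - 1) div 2) \<le> k \<and> k \<le> (int n - 1) div 2 - 1}"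
    then obtain k where k: "- int m \<le> k" "k \<le> int m - 1" "x = sd_a n (2 * k + 1)" unfolding d by blast
    show "x \<in> {(i, 0::nat) | i. odd i \<and> (i + 2 \<le> n \<or> (3 * n + 2 \<le> i \<and> i < 4 * n))}"
    proof (cases "k \<ge> 0")
      case True
      then have "x = (nat (2 * k + 1), 0)" using k m by (simp add: sd_a_pos)
      moreover have "nat (2 * k + 1) = 2 * nat k + 1" using True by simp
      ultimately show ?thesis using k m True by auto
    next
      case False
      then have "x = (nat (2 * k + 1 + 4 * int n), 0)" using k m by (simp add: sd_a_neg)
      moreover have "nat (2 * k + 1 + 4 * int n) = 2 * nat (k + 2 * int n) + 1" using False k m by simp
      ultimately show ?thesis using k m False by auto
    qed
  next
    fix x assume "x \<in> {(i, 0::nat) | i. odd i \<and> (i + 2 \<le> n \<or> (3 * n + 2 \<le> i \<and> i < 4 * n))}"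
    then obtain i where i: "x = (i, 0)" "odd i" "i + 2 \<le> n \<or> (3 * n + 2 \<le> i \<and> i < 4 * n)" by blast
    then obtain q where q: "i = 2 * q + 1" by (auto elim: oddE)
    show "x \<in> {sd_a n (2 * k + 1) | k. - ((int n - 1) div 2) \<le> k \<and> k \<le> (int n - 1) div 2 - 1}"
      unfolding d
    proof (cases "i + 2 \<le> n")
      case True
      have "sd_a n (2 * int q + 1) = (i, 0)" using i q True by (subst sd_a_pos) auto
      moreover have "- int m \<le> int q" "int q \<le> int m - 1" using True q m by auto
      ultimately show "x \<in> {sd_a n (2 * k + 1) | k. - int m \<le> k \<and> k \<le> int m - 1}" using i by (auto intro!: exI[of _ "int q"])
    next
      case False
      then have F: "3 * n + 2 \<le> i" "i < 4 * n" using i by auto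
      have "sd_a n (2 * (int q - 2 * int n) + 1) = (i, 0)" using F q by (subst sd_a_neg) auto
      moreover have "- int m \<le> int q - 2 * int n" "int q - 2 * int n \<le> int m - 1" using F q m by auto
      ultimately show "x \<in> {sd_a n (2 * k + 1) | k. - int m \<le> k \<and> k \<le> int m - 1}" using i by (auto intro!: exI[of _ "int q - 2 * int n"])
    qed
  qed
qed

lemma P5: "{sd_ab n (4 * k + j) | k j. 1 \<le> k \<and> k \<le> int n - 1 \<and> j \<in> {0, 1, 2, 3}} = {(i, 1::nat) | i. 4 \<le> i \<and> i < 4 * n}"
proof (intro set_eqI iffI)
  fix x assume "x \<in> {sd_ab n (4 * k + j) | k j. 1 \<le> k \<and> k \<le> int n - 1 \<and> j \<in> {0, 1, 2, 3}}"
  then obtain k j where k: "1 \<le> k" "k \<le> int n - 1" "j \<in> {0,1,2,3}" "x = sd_ab n (4 * k + j)" by blast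
  have j: "0 \<le> j" "j \<le> 3" using k(3) by auto
  then have "x = (nat (4 * k + j), 1)" using k by (simp add: sd_ab_pos)
  then show "x \<in> {(i, 1::nat) | i. 4 \<le> i \<and> i < 4 * n}" using k j by auto
next
  fix x assume "x \<in> {(i, 1::nat) | i. 4 \<le> i \<and> i < 4 * n}"
  then obtain i where i: "x = (i, 1)" "4 \<le> i" "i < 4 * n" by blast
  have r: "i mod 4 = 0 \<or> i mod 4 = 1 \<or> i mod 4 = 2 \<or> i mod 4 = 3" by presburger
  have e0: "i = 4 * (i div 4) + i mod 4" by simp
  have e: "int i = 4 * int (i div 4) + int (i mod 4)" using arg_cong[OF e0, of int] by (simp only: of_nat_add of_nat_mult of_nat_numeral)
  have A: "x = sd_ab n (4 * int (i div 4) + int (i mod 4))" using i e[symmetric] by (subst sd_ab_pos) auto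
  moreover have B: "1 \<le> int (i div 4)" "int (i div 4) \<le> int n - 1" using i by auto
  moreover have C: "int (i mod 4) \<in> {0, 1, 2, 3}" using r by auto
  ultimately have "\<exists>k j. x = sd_ab n (4 * k + j) \<and> 1 \<le> k \<and> k \<le> int n - 1 \<and> j \<in> {0, 1, 2, 3}"
    by blast
  then show "x \<in> {sd_ab n (4 * k + j) | k j. 1 \<le> k \<and> k \<le> int n - 1 \<and> j \<in> {0, 1, 2, 3}}"
    by (simp only: mem_Collect_eq)
qed

definition Bp :: "nat \<Rightarrow> nat \<times> nat \<Rightarrow> bool" where
  "Bp n x = (if snd x = 0 then
     (even (fst x) \<and> 2 \<le> fst x \<and> fst x + 2 \<le> 2 * n) \<or>
     (odd (fst x) \<and> (if even n then fst x + 1 \<le> n \<or> 3 * n + 1 \<le> fst x else fst x + 2 \<le> n \<or> 3 * n + 2 \<le> fst x))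
   else (if even n then 1 \<le> fst x \<and> fst x + 2 \<le> 4 * n else 4 \<le> fst x))"

lemma basis_even_eq: assumes "even n" shows "basis_even n = {x \<in> sd_carrier n. Bp n x}"
proof (intro set_eqI)
  fix x :: "nat \<times> nat"
  obtain a b where x: "x = (a, b)" by fastforce
  show "x \<in> basis_even n \<longleftrightarrow> x \<in> {x \<in> sd_carrier n. Bp n x}"
    unfolding basis_even_def P1 P2e[OF assms] P3 P4 x using assms
    by (cases "b = 0"; cases "b = 1"; simp add: Bp_def sd_carrier_def; presburger)
qed

lemma basis_odd_eq: assumes "odd n" shows "basis_odd n = {x \<in> sd_carrier n. Bp n x}"
proof (intro set_eqI)
  fix x :: "nat \<times> nat"
  obtain a b where x: "x = (a, b)" by fastforce
  show "x \<in> basis_odd n \<longleftrightarrow> x \<in> {x \<in> sd_carrier n. Bp n x}"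
    unfolding basis_odd_def P1 P2o[OF assms] P5 x using assms
    by (cases "b = 0"; cases "b = 1"; simp add: Bp_def sd_carrier_def; presburger)
qed

lemma mod_inj_int:
  fixes M z1 z2 :: int
  assumes "z1 mod M = z2 mod M" "\<bar>z1 - z2\<bar> < M"
  shows "z1 = z2"
proof (rule ccontr)
  assume ne: "z1 \<noteq> z2"
  have "M dvd (z1 - z2)" using assms(1) by (simp add: mod_eq_dvd_iff)
  then have "\<bar>M\<bar> \<le> \<bar>z1 - z2\<bar>" using ne by (intro dvd_imp_le_int) auto
  then show False using assms(2) by simp
qed

lemma sd_a_inj: "n \<ge> 1 \<Longrightarrow> sd_a n z1 = sd_a n z2 \<Longrightarrow> \<bar>z1 - z2\<bar> < 4 * int n \<Longrightarrow> z1 = z2"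
proof -
  assume a: "n \<ge> 1" "sd_a n z1 = sd_a n z2" "\<bar>z1 - z2\<bar> < 4 * int n"
  have p: "0 \<le> z1 mod (4 * int n)" "0 \<le> z2 mod (4 * int n)" using a(1) by simp_all
  have "z1 mod (4 * int n) = z2 mod (4 * int n)" using a(2) p by (simp add: sd_a_def)
  then show ?thesis using a(3) by (rule mod_inj_int)
qed

lemma sd_ab_inj: "n \<ge> 1 \<Longrightarrow> sd_ab n z1 = sd_ab n z2 \<Longrightarrow> \<bar>z1 - z2\<bar> < 4 * int n \<Longrightarrow> z1 = z2"
proof -
  assume a: "n \<ge> 1" "sd_ab n z1 = sd_ab n z2" "\<bar>z1 - z2\<bar> < 4 * int n"
  have p: "0 \<le> z1 mod (4 * int n)" "0 \<le> z2 mod (4 * int n)" using a(1) by simp_all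
  have "z1 mod (4 * int n) = z2 mod (4 * int n)" using a(2) p by (simp add: sd_ab_def)
  then show ?thesis using a(3) by (rule mod_inj_int)
qed

lemma card_img_int:
  assumes "inj_on f {a..b::int}"
  shows "card {f k | k. a \<le> k \<and> k \<le> b} = nat (b - a + 1)"
proof -
  have "{f k | k. a \<le> k \<and> k \<le> b} = f ` {a..b}" by auto
  then show ?thesis using card_image[OF assms] by simp
qed

lemma cP1: assumes n: "n \<ge> 1" shows "card {sd_a n (2 * k) | k. 1 \<le> k \<and> k \<le> int n - 1} = n - 1"
proof -
  have "inj_on (\<lambda>k. sd_a n (2 * k)) {1..int n - 1}"
    by (rule inj_onI) (use sd_a_inj[OF n] in force)
  then show ?thesis by (subst card_img_int) auto
qed

lemma cP2e: assumes n: "n \<ge> 1" and e: "even n"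
  shows "card {sd_a n (2 * k + 1) | k. - (int n div 2) \<le> k \<and> k \<le> int n div 2 - 1} = n"
proof -
  obtain m where m: "n = 2 * m" using e by (auto elim: evenE)
  have d: "int n div 2 = int m" using m by simp
  have "inj_on (\<lambda>k. sd_a n (2 * k + 1)) {- int m..int m - 1}"
  proof (rule inj_onI)
    fix k1 k2 assume "k1 \<in> {- int m..int m - 1}" "k2 \<in> {- int m..int m - 1}" "sd_a n (2 * k1 + 1) = sd_a n (2 * k2 + 1)"
    then show "k1 = k2" using sd_a_inj[OF n, of "2 * k1 + 1" "2 * k2 + 1"] m by auto
  qed
  then show ?thesis unfolding d using m by (subst card_img_int) auto
qed

lemma cP2o: assumes n: "n \<ge> 1" and e: "odd n"
  shows "card {sd_a n (2 * k + 1) | k. - ((int n - 1) div 2) \<le> k \<and> k \<le> (int n - 1) div 2 - 1} = n - 1"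
proof -
  obtain m where m: "n = 2 * m + 1" using e by (auto elim: oddE)
  have d: "(int n - 1) div 2 = int m" using m by simp
  have "inj_on (\<lambda>k. sd_a n (2 * k + 1)) {- int m..int m - 1}"
  proof (rule inj_onI)
    fix k1 k2 assume "k1 \<in> {- int m..int m - 1}" "k2 \<in> {- int m..int m - 1}" "sd_a n (2 * k1 + 1) = sd_a n (2 * k2 + 1)"
    then show "k1 = k2" using sd_a_inj[OF n, of "2 * k1 + 1" "2 * k2 + 1"] m by auto
  qed
  then show ?thesis unfolding d using m by (subst card_img_int) auto
qed

lemma cP3: assumes n: "n \<ge> 1" shows "card {sd_ab n (2 * k) | k. 1 \<le> k \<and> k \<le> 2 * int n - 1} = 2 * n - 1"
proof -
  have "inj_on (\<lambda>k. sd_ab n (2 * k)) {1..2 * int n - 1}"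
    by (rule inj_onI) (use sd_ab_inj[OF n] in force)
  then show ?thesis by (subst card_img_int) auto
qed

lemma cP4: assumes n: "n \<ge> 1" shows "card {sd_ab n (2 * k - 1) | k. 1 \<le> k \<and> k \<le> 2 * int n - 1} = 2 * n - 1"
proof -
  have "inj_on (\<lambda>k. sd_ab n (2 * k - 1)) {1..2 * int n - 1}"
    by (rule inj_onI) (use sd_ab_inj[OF n] in force)
  then show ?thesis by (subst card_img_int) auto
qed

lemma cP5: "card {(i, 1::nat) | i. 4 \<le> i \<and> i < 4 * n} = 4 * n - 4"
proof -
  have "{(i, 1::nat) | i. 4 \<le> i \<and> i < 4 * n} = (\<lambda>i. (i, 1)) ` {4..<4 * n}" by auto
  moreover have "inj_on (\<lambda>i. (i, 1::nat)) {4..<4 * n}" by (auto simp: inj_on_def)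
  ultimately show ?thesis by (simp add: card_image)
qed

lemma card_even: assumes n: "n \<ge> 1" and e: "even n" shows "card (basis_even n) = 3 * (2 * n - 1)"
proof -
  define N1 where "N1 = {(i, 0::nat) | i. even i \<and> 2 \<le> i \<and> i + 2 \<le> 2 * n}"
  define N2 where "N2 = {(i, 0::nat) | i. odd i \<and> (i + 1 \<le> n \<or> (3 * n + 1 \<le> i \<and> i < 4 * n))}"
  define N3 where "N3 = {(i, 1::nat) | i. even i \<and> 2 \<le> i \<and> i + 2 \<le> 4 * n}"
  define N4 where "N4 = {(i, 1::nat) | i. odd i \<and> i + 3 \<le> 4 * n}"
  have c: "card N1 = n - 1" "card N2 = n" "card N3 = 2 * n - 1" "card N4 = 2 * n - 1"
    using cP1[OF n] cP2e[OF n e] cP3[OF n] cP4[OF n]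
    unfolding N1_def N2_def N3_def N4_def P1 P2e[OF e] P3 P4 by simp_all
  have f: "finite N1" "finite N2" "finite N3" "finite N4"
    by (rule finite_subset[OF _ finite_G[of n]]; auto simp: N1_def N2_def N3_def N4_def sd_carrier_def)+
  have "basis_even n = N1 \<union> N2 \<union> N3 \<union> N4"
    unfolding basis_even_def P1 P2e[OF e] P3 P4 N1_def N2_def N3_def N4_def ..
  moreover have "card (N1 \<union> N2 \<union> N3 \<union> N4) = card N1 + card N2 + card N3 + card N4"
  proof -
    have d1: "N1 \<inter> N2 = {}" by (auto simp: N1_def N2_def)
    have d2: "(N1 \<union> N2) \<inter> N3 = {}" by (auto simp: N1_def N2_def N3_def)
    have d3: "(N1 \<union> N2 \<union> N3) \<inter> N4 = {}" by (auto simp: N1_def N2_def N3_def N4_def)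
    show ?thesis using f d1 d2 d3 by (simp add: card_Un_disjoint)
  qed
  ultimately show ?thesis using c n by simp
qed

lemma card_odd: assumes n: "n \<ge> 1" and e: "odd n" shows "card (basis_odd n) = 6 * (n - 1)"
proof -
  define N1 where "N1 = {(i, 0::nat) | i. even i \<and> 2 \<le> i \<and> i + 2 \<le> 2 * n}"
  define N2 where "N2 = {(i, 0::nat) | i. odd i \<and> (i + 2 \<le> n \<or> (3 * n + 2 \<le> i \<and> i < 4 * n))}"
  define N5 where "N5 = {(i, 1::nat) | i. 4 \<le> i \<and> i < 4 * n}"
  have c: "card N1 = n - 1" "card N2 = n - 1" "card N5 = 4 * n - 4"
    using cP1[OF n] cP2o[OF n e] cP5[of n]
    unfolding N1_def N2_def N5_def P1 P2o[OF e] by simp_all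
  have f: "finite N1" "finite N2" "finite N5"
    by (rule finite_subset[OF _ finite_G[of n]]; auto simp: N1_def N2_def N5_def sd_carrier_def)+
  have "basis_odd n = N1 \<union> N2 \<union> N5"
    unfolding basis_odd_def P1 P2o[OF e] P5 N1_def N2_def N5_def ..
  moreover have "card (N1 \<union> N2 \<union> N5) = card N1 + card N2 + card N5"
  proof -
    have d1: "N1 \<inter> N2 = {}" by (auto simp: N1_def N2_def)
    have d2: "(N1 \<union> N2) \<inter> N5 = {}" by (auto simp: N1_def N2_def N5_def)
    show ?thesis using f d1 d2 by (simp add: card_Un_disjoint)
  qed
  ultimately show ?thesis using c n by simp
qed



lemma Pval:
  fixes n i :: nat
  assumes n: "n \<ge> 1" and i: "i < 4 * n"
  shows "(i * (2 * n - 1)) mod (4 * n) = (if even i then (if i = 0 then 0 else 4 * n - i) else (if i < 2 * n then 2 * n - i else 6 * n - i))"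
proof -
  have s: "i * (2 * n - 1) + i = 2 * n * i" using n by (simp add: algebra_simps diff_mult_distrib2)
  show ?thesis
  proof (cases "even i")
    case True
    then obtain q where q: "i = 2 * q" by (auto elim: evenE)
    show ?thesis
    proof (cases "i = 0")
      case False
      have "[i * (2 * n - 1) + i = (4 * n - i) + i] (mod (4 * n))"
        using s q i by (simp add: cong_def mult.assoc mult.left_commute)
      then have "[i * (2 * n - 1) = 4 * n - i] (mod (4 * n))" by (simp add: cong_add_rcancel_nat)
      then have "(i * (2 * n - 1)) mod (4 * n) = (4 * n - i) mod (4 * n)" by (simp add: cong_def)
      also have "\<dots> = 4 * n - i" using False i by simp
      finally show ?thesis using True False by simp
    qed (simp)
  next
    case False
    then obtain q where q: "i = 2 * q + 1" by (auto elim: oddE)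
    have e1: "2 * n * i = 2 * n + q * (4 * n)" using q by (simp add: algebra_simps)
    show ?thesis
    proof (cases "i < 2 * n")
      case True
      have "[i * (2 * n - 1) + i = (2 * n - i) + i] (mod (4 * n))"
        using s e1 True by (simp add: cong_def)
      then have "[i * (2 * n - 1) = 2 * n - i] (mod (4 * n))" by (simp add: cong_add_rcancel_nat)
      then have "(i * (2 * n - 1)) mod (4 * n) = (2 * n - i) mod (4 * n)" by (simp add: cong_def)
      also have "\<dots> = 2 * n - i" using True by simp
      finally show ?thesis using True False by simp
    next
      case F2: False
      have e2: "(6 * n - i) + i = 2 * n + 1 * (4 * n)" using i by simp
      have "[i * (2 * n - 1) + i = (6 * n - i) + i] (mod (4 * n))"
        unfolding cong_def s e1 e2 by (simp only: mod_mult_self1)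
      then have "[i * (2 * n - 1) = 6 * n - i] (mod (4 * n))" by (simp add: cong_add_rcancel_nat)
      then have "(i * (2 * n - 1)) mod (4 * n) = (6 * n - i) mod (4 * n)" by (simp add: cong_def)
      also have "\<dots> = 6 * n - i"
      proof -
        have "i \<noteq> 2 * n" using False by auto
        then have "6 * n - i < 4 * n" using F2 i by linarith
        then show ?thesis by simp
      qed
      finally show ?thesis using F2 False by simp
    qed
  qed
qed

lemma Pparity:
  fixes n i :: nat
  assumes n: "n \<ge> 1" and i: "i < 4 * n"
  shows "even ((i * (2 * n - 1)) mod (4 * n)) \<longleftrightarrow> even i"
proof -
  have ev: "a + i = 2 * c \<Longrightarrow> even a \<longleftrightarrow> even i" for a c :: nat
    by (metis dvd_triv_left even_add)
  have "even (4 * n - i) \<longleftrightarrow> even i" using i by (intro ev[of _ "2 * n"]) simp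
  moreover have "i < 2 * n \<Longrightarrow> even (2 * n - i) \<longleftrightarrow> even i" by (intro ev[of _ "n"]) simp
  moreover have "\<not> i < 2 * n \<Longrightarrow> even (6 * n - i) \<longleftrightarrow> even i" using i by (intro ev[of _ "3 * n"]) simp
  ultimately show ?thesis unfolding Pval[OF n i] by auto
qed

lemma Bp_ev: "even k \<Longrightarrow> Bp n (k, 0) \<longleftrightarrow> 2 \<le> k \<and> k + 2 \<le> 2 * n"
  by (simp add: Bp_def)
lemma Bp_oe: "odd k \<Longrightarrow> even n \<Longrightarrow> Bp n (k, 0) \<longleftrightarrow> k + 1 \<le> n \<or> 3 * n + 1 \<le> k"
  by (simp add: Bp_def)
lemma Bp_oo: "odd k \<Longrightarrow> odd n \<Longrightarrow> Bp n (k, 0) \<longleftrightarrow> k + 2 \<le> n \<or> 3 * n + 2 \<le> k"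
  by (simp add: Bp_def)

lemma BpA:
  assumes n: "n \<ge> 1" and i: "i < 4 * n" and B: "Bp n (i, 0)"
  shows "\<not> Bp n ((i * (2 * n - 1)) mod (4 * n), 0)"
proof -
  define j where "j = (i * (2 * n - 1)) mod (4 * n)"
  have par: "even j \<longleftrightarrow> even i" unfolding j_def by (rule Pparity[OF n i])
  have jv: "j = (if even i then (if i = 0 then 0 else 4 * n - i) else (if i < 2 * n then 2 * n - i else 6 * n - i))"
    unfolding j_def by (rule Pval[OF n i])
  show ?thesis unfolding j_def[symmetric]
  proof (cases "even i")
    case True
    then have Bi: "2 \<le> i" "i + 2 \<le> 2 * n" using B Bp_ev by blast+
    then have jj: "j = 4 * n - i" using jv True by simp
    have "\<not> (2 \<le> j \<and> j + 2 \<le> 2 * n)" using jj Bi by linarith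
    then show "\<not> Bp n (j, 0)" using Bp_ev[of j n] par True by blast
  next
    case False
    then have oj: "odd j" using par by blast
    show "\<not> Bp n (j, 0)"
    proof (cases "even n")
      case en: True
      have Bi: "i + 1 \<le> n \<or> 3 * n + 1 \<le> i" using B Bp_oe[OF False en] by blast
      have "\<not> (j + 1 \<le> n \<or> 3 * n + 1 \<le> j)"
      proof (cases "i < 2 * n")
        case True then have "j = 2 * n - i" using jv False by simp
        then show ?thesis using Bi True by linarith
      next
        case F: False then have "j = 6 * n - i" using jv False by simp
        then show ?thesis using Bi F i by linarith
      qed
      then show ?thesis using Bp_oe[OF oj en] by blast
    next
      case en: False
      have Bi: "i + 2 \<le> n \<or> 3 * n + 2 \<le> i" using B Bp_oo[OF False en] by blast
      have "\<not> (j + 2 \<le> n \<or> 3 * n + 2 \<le> j)"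
      proof (cases "i < 2 * n")
        case True then have "j = 2 * n - i" using jv False by simp
        then show ?thesis using Bi True by linarith
      next
        case F: False then have "j = 6 * n - i" using jv False by simp
        then show ?thesis using Bi F i by linarith
      qed
      then show ?thesis using Bp_oo[OF oj en] by blast
    qed
  qed
qed

lemma BpB:
  assumes n: "n \<ge> 1" and i: "i < 4 * n" and B: "\<not> Bp n (i, 0)"
  shows "(i * (2 * n - 1)) mod (4 * n) = i \<or> Bp n ((i * (2 * n - 1)) mod (4 * n), 0)"
proof -
  define j where "j = (i * (2 * n - 1)) mod (4 * n)"
  have par: "even j \<longleftrightarrow> even i" unfolding j_def by (rule Pparity[OF n i])
  have jv: "j = (if even i then (if i = 0 then 0 else 4 * n - i) else (if i < 2 * n then 2 * n - i else 6 * n - i))"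
    unfolding j_def by (rule Pval[OF n i])
  show ?thesis unfolding j_def[symmetric]
  proof (cases "even i")
    case True
    then have Bi: "\<not> (2 \<le> i \<and> i + 2 \<le> 2 * n)" using B Bp_ev by blast
    show "j = i \<or> Bp n (j, 0)"
    proof (cases "i = 0 \<or> i = 2 * n")
      case True then show ?thesis using jv \<open>even i\<close> by auto
    next
      case False
      then have jj: "j = 4 * n - i" using jv True by simp
      have "2 \<le> j \<and> j + 2 \<le> 2 * n"
      proof -
        have "i \<noteq> 1" "i \<noteq> 2 * n + 1" "i + 1 \<noteq> 2 * n" "i + 1 \<noteq> 4 * n" using True by presburger+
        then show ?thesis using jj Bi False i by linarith
      qed
      then show ?thesis using Bp_ev[of j n] par True by blast
    qed
  next
    case False
    then have oj: "odd j" using par by blast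
    show "j = i \<or> Bp n (j, 0)"
    proof (cases "even n")
      case en: True
      have Bi: "\<not> (i + 1 \<le> n \<or> 3 * n + 1 \<le> i)" using B Bp_oe[OF False en] by blast
      have "i \<noteq> n" "i \<noteq> 3 * n" "i \<noteq> 2 * n" using False en by auto
      then have "j + 1 \<le> n \<or> 3 * n + 1 \<le> j"
      proof (cases "i < 2 * n")
        case True then have "j = 2 * n - i" using jv False by simp
        then show ?thesis using Bi True \<open>i \<noteq> n\<close> by linarith
      next
        case F: False then have "j = 6 * n - i" using jv False by simp
        then show ?thesis using Bi F i \<open>i \<noteq> 2 * n\<close> \<open>i \<noteq> 3 * n\<close> by linarith
      qed
      then show ?thesis using Bp_oe[OF oj en] by blast
    next
      case en: False
      have Bi: "\<not> (i + 2 \<le> n \<or> 3 * n + 2 \<le> i)" using B Bp_oo[OF False en] by blast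
      show ?thesis
      proof (cases "i = n \<or> i = 3 * n")
        case True
        then show ?thesis using jv False by auto
      next
        case nn: False
        have "i \<noteq> n + 1" "i \<noteq> 3 * n + 1" "i \<noteq> 2 * n" "i + 1 \<noteq> n" "i + 1 \<noteq> 3 * n" using False en by presburger+
        then have "j + 2 \<le> n \<or> 3 * n + 2 \<le> j"
        proof (cases "i < 2 * n")
          case True then have "j = 2 * n - i" using jv False by simp
          then show ?thesis using Bi True nn \<open>i \<noteq> n + 1\<close> \<open>i + 1 \<noteq> n\<close> by linarith
        next
          case F: False then have "j = 6 * n - i" using jv False by simp
          then show ?thesis using Bi F i nn \<open>i \<noteq> 3 * n + 1\<close> \<open>i \<noteq> 2 * n\<close> \<open>i + 1 \<noteq> 3 * n\<close> by linarith
        qed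
        then show ?thesis using Bp_oo[OF oj en] by blast
      qed
    qed
  qed
qed

lemma conj_snd:
  assumes "a \<in> G n" "b \<in> G n" "c \<in> G n" "sd_mult n a b = sd_mult n c a"
  shows "snd b = snd c"
proof -
  have "(snd a + snd b) mod 2 = (snd c + snd a) mod 2" using assms(4) by (simp add: sd_mult_def)
  moreover have "snd a < 2" "snd b < 2" "snd c < 2" using assms(1-3) by (auto simp: sd_carrier_def)
  ultimately show ?thesis by presburger
qed

lemma conj_fst:
  assumes "sd_mult n a b = sd_mult n c a"
  shows "[fst a + fst b * (2 * n - 1) ^ snd a = fst c + fst a * (2 * n - 1) ^ snd c] (mod (4 * n))"
  using assms by (simp add: sd_mult_def cong_def)

lemma uu: fixes n :: nat shows "n \<ge> 1 \<Longrightarrow> [(2 * n - 1) * (2 * n - 1) = 1] (mod (4 * n))"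
  using u_sq[of n] by (simp add: cong_def power2_eq_square)

lemma S0_closed:
  fixes n i0 x d r :: nat
  assumes n: "n \<ge> 1" and i0: "i0 < 4 * n" and x: "x \<in> {i0, (i0 * (2 * n - 1)) mod (4 * n)}"
  shows "(x * (2 * n - 1)) mod (4 * n) \<in> {i0, (i0 * (2 * n - 1)) mod (4 * n)}"
proof (cases "x = i0")
  case False
  then have x': "x = (i0 * (2 * n - 1)) mod (4 * n)" using x by auto
  have "[x * (2 * n - 1) = i0 * (2 * n - 1) * (2 * n - 1)] (mod (4 * n))"
    unfolding x' by (simp add: cong_def mod_mult_left_eq)
  also have "[i0 * (2 * n - 1) * (2 * n - 1) = i0 * 1] (mod (4 * n))"
    unfolding mult.assoc by (intro cong_mult cong_refl uu[OF n])
  finally have "(x * (2 * n - 1)) mod (4 * n) = i0" using i0 by (simp add: cong_def)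
  then show ?thesis by simp
qed simp

lemma S0_inv:
  fixes n i0 x d r :: nat
  assumes n: "n \<ge> 1" and i0: "i0 < 4 * n"
    and abc: "a \<in> G n" "b \<in> G n" "c \<in> G n" "sd_mult n a b = sd_mult n c a"
  shows "b \<in> {(i0, 0), ((i0 * (2 * n - 1)) mod (4 * n), 0)} \<longleftrightarrow> c \<in> {(i0, 0), ((i0 * (2 * n - 1)) mod (4 * n), 0)}"
proof -
  define T where "T = {i0, (i0 * (2 * n - 1)) mod (4 * n)}"
  have mem: "y \<in> {(i0, 0), ((i0 * (2 * n - 1)) mod (4 * n), 0)} \<longleftrightarrow> snd y = 0 \<and> fst y \<in> T" for y :: "nat \<times> nat"
    by (cases y) (auto simp: T_def)
  have sn: "snd b = snd c" by (rule conj_snd[OF abc])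
  have cf: "[fst a + fst b * (2 * n - 1) ^ snd a = fst c + fst a * (2 * n - 1) ^ snd c] (mod (4 * n))"
    by (rule conj_fst[OF abc(4)])
  show ?thesis
  proof (cases "snd b = 0")
    case False then show ?thesis using sn mem by auto
  next
    case True
    then have "[fst b * (2 * n - 1) ^ snd a + fst a = fst c + fst a] (mod (4 * n))"
      using cf sn by (simp add: add.commute)
    then have c1: "[fst b * (2 * n - 1) ^ snd a = fst c] (mod (4 * n))" by (simp add: cong_add_rcancel_nat)
    have lt: "fst b < 4 * n" "fst c < 4 * n" "snd a < 2" using abc by (auto simp: sd_carrier_def)
    have "fst b \<in> T \<longleftrightarrow> fst c \<in> T"
    proof (cases "snd a = 0")
      case True
      then have "fst b = fst c" using c1 lt by (auto intro: cong_less_modulus_unique_nat)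
      then show ?thesis by simp
    next
      case False
      then have a1: "snd a = 1" using lt by simp
      have jc: "fst c = (fst b * (2 * n - 1)) mod (4 * n)"
        using c1 a1 lt by (simp add: cong_def)
      have "[fst c * (2 * n - 1) = fst b * (2 * n - 1) * (2 * n - 1)] (mod (4 * n))"
        using c1 a1 by (simp add: cong_mult cong_sym)
      also have "[fst b * (2 * n - 1) * (2 * n - 1) = fst b * 1] (mod (4 * n))"
        unfolding mult.assoc by (intro cong_mult cong_refl uu[OF n])
      finally have ib: "fst b = (fst c * (2 * n - 1)) mod (4 * n)"
        using lt by (simp add: cong_def)
      show ?thesis unfolding T_def
      proof
        assume "fst b \<in> {i0, i0 * (2 * n - 1) mod (4 * n)}"
        from S0_closed[OF n i0 this] show "fst c \<in> {i0, i0 * (2 * n - 1) mod (4 * n)}" unfolding jc .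
      next
        assume "fst c \<in> {i0, i0 * (2 * n - 1) mod (4 * n)}"
        from S0_closed[OF n i0 this] show "fst b \<in> {i0, i0 * (2 * n - 1) mod (4 * n)}" unfolding ib[symmetric] .
      qed
    qed
    then show ?thesis using mem sn True by auto
  qed
qed

lemma Sd_inv:
  fixes n i0 x d r :: nat
  assumes n: "n \<ge> 1" and d: "d dvd 4 * n" and u1: "[2 * n - 1 = 1] (mod d)"
    and abc: "a \<in> G n" "b \<in> G n" "c \<in> G n" "sd_mult n a b = sd_mult n c a"
  shows "b \<in> {x \<in> G n. snd x = 1 \<and> fst x mod d = r} \<longleftrightarrow> c \<in> {x \<in> G n. snd x = 1 \<and> fst x mod d = r}"
proof -
  have sn: "snd b = snd c" by (rule conj_snd[OF abc])
  have cf: "[fst a + fst b * (2 * n - 1) ^ snd a = fst c + fst a * (2 * n - 1) ^ snd c] (mod (4 * n))"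
    by (rule conj_fst[OF abc(4)])
  show ?thesis
  proof (cases "snd b = 1")
    case False then show ?thesis using sn by auto
  next
    case True
    have cd: "[fst a + fst b * (2 * n - 1) ^ snd a = fst c + fst a * (2 * n - 1) ^ snd c] (mod d)"
      using cf d by (rule cong_dvd_modulus_nat)
    have p1: "[(2 * n - 1) ^ k = 1] (mod d)" for k
      using cong_pow[OF u1, of k] by simp
    have "[fst a + fst b * (2 * n - 1) ^ snd a = fst a + fst b * 1] (mod d)"
      by (intro cong_add cong_mult cong_refl p1)
    moreover have "[fst c + fst a * (2 * n - 1) ^ snd c = fst c + fst a * 1] (mod d)"
      by (intro cong_add cong_mult cong_refl p1)
    ultimately have "[fst a + fst b = fst c + fst a] (mod d)"
      using cd by (metis (no_types, lifting) cong_sym cong_trans mult_1_right)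
    then have "[fst b = fst c] (mod d)" by (simp add: add.commute cong_add_lcancel_nat)
    then have "fst b mod d = fst c mod d" by (simp add: cong_def)
    then show ?thesis using sn abc by auto
  qed
qed

lemma step1:
  fixes n k :: nat and \<beta> :: "nat \<times> nat \<Rightarrow> 'a::field"
  assumes n: "n \<ge> 1" and z: "inn_der n \<beta> = 0" and k: "k < 4 * n"
  shows "\<beta> (k, 1) = \<beta> ((k + (if even n then 2 else 4)) mod (4 * n), 1)"
proof -
  define d :: nat where "d = (if even n then 2 else 4)"
  define s :: nat where "s = (if even n then n + 1 else 2)"
  obtain q where q: "d + s * (2 * n - 1) = s + q * (4 * n)"
  proof (cases "even n")
    case True
    then obtain m where m: "n = 2 * m" by (auto elim: evenE)
    have "d + s * (2 * n - 1) = s + m * (4 * n)"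
      using True m n unfolding d_def s_def by (cases m) (auto simp: algebra_simps)
    then show ?thesis by (rule that)
  next
    case False
    have "d + s * (2 * n - 1) = s + 1 * (4 * n)"
      using False n unfolding d_def s_def by auto
    then show ?thesis by (rule that)
  qed
  have h: "(s, 0) \<in> G n" using n by (auto simp: s_def sd_carrier_def)
  have y: "(k, 1) \<in> G n" using k by (auto simp: sd_carrier_def)
  have y': "((k + d) mod (4 * n), 1) \<in> G n" using n by (auto simp: sd_carrier_def)
  have "((k + d) mod (4 * n) + s * (2 * n - 1)) mod (4 * n) = (k + (d + s * (2 * n - 1))) mod (4 * n)"
    by (simp add: mod_add_left_eq add.assoc)
  also have "\<dots> = ((s + k) + q * (4 * n)) mod (4 * n)" unfolding q by (simp add: algebra_simps)
  also have "\<dots> = (s + k) mod (4 * n)" by (rule mod_mult_self1)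
  finally have "sd_mult n ((k + d) mod (4 * n), 1) (s, 0) = sd_mult n (s, 0) (k, 1)"
    by (simp add: sd_mult_def)
  from central_inv[OF n z h y y' this] show ?thesis unfolding d_def .
qed

lemma stepT:
  fixes n k :: nat and \<beta> :: "nat \<times> nat \<Rightarrow> 'a::field"
  assumes n: "n \<ge> 1" and z: "inn_der n \<beta> = 0" and k: "k < 4 * n"
  shows "\<beta> (k, 1) = \<beta> ((k + (if even n then 2 else 4) * t) mod (4 * n), 1)"
proof (induction t)
  case 0 then show ?case using k by simp
next
  case (Suc t)
  define d :: nat where "d = (if even n then 2 else 4)"
  have "\<beta> (k, 1) = \<beta> ((k + d * t) mod (4 * n), 1)" using Suc unfolding d_def .
  also have "\<dots> = \<beta> (((k + d * t) mod (4 * n) + d) mod (4 * n), 1)"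
    using step1[OF n z, of "(k + d * t) mod (4 * n)"] n unfolding d_def by simp
  also have "((k + d * t) mod (4 * n) + d) mod (4 * n) = (k + d * t + d) mod (4 * n)"
    by (rule mod_add_left_eq)
  also have "k + d * t + d = k + d * Suc t" by simp
  finally show ?case unfolding d_def .
qed

definition Bset :: "nat \<Rightarrow> (nat \<times> nat) set" where "Bset n = {x \<in> sd_carrier n. Bp n x}"

lemma KEY_B:
  fixes n :: nat and \<beta> :: "nat \<times> nat \<Rightarrow> 'a::field"
  assumes n: "n \<ge> 1" and z: "inn_der n \<beta> = 0" and out: "\<And>x. x \<notin> Bset n \<Longrightarrow> \<beta> x = 0"
    and x: "x \<in> Bset n"
  shows "\<beta> x = 0"
proof -
  obtain i e where xe: "x = (i, e)" by fastforce
  have i: "i < 4 * n" and e: "e < 2" and B: "Bp n (i, e)" using x by (auto simp: Bset_def sd_carrier_def xe)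
  show ?thesis
  proof (cases "e = 0")
    case True
    define j where "j = (i * (2 * n - 1)) mod (4 * n)"
    have h: "(0, 1) \<in> G n" and y: "(i, 0) \<in> G n" and y': "(j, 0) \<in> G n"
      using n i by (auto simp: sd_carrier_def j_def)
    have "sd_mult n (j, 0) (0, 1) = sd_mult n (0, 1) (i, 0)" by (simp add: sd_mult_def j_def)
    from central_inv[OF n z h y y' this] have "\<beta> (i, 0) = \<beta> (j, 0)" .
    moreover have "\<not> Bp n (j, 0)" unfolding j_def by (rule BpA[OF n i]) (use B True in simp)
    then have "\<beta> (j, 0) = 0" by (intro out) (simp add: Bset_def)
    ultimately show ?thesis using True xe by simp
  next
    case False
    then have e1: "e = 1" using e by simp
    obtain t r where tr: "(i + (if even n then 2 else 4) * t) mod (4 * n) = r" and nb: "\<not> Bp n (r, 1)"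
    proof (cases "even n")
      case True
      show ?thesis
      proof (cases "even i")
        case True
        have "i + 2 * (2 * n - i div 2) = 4 * n" using True i by auto
        then have "(i + (if even n then 2 else 4) * (2 * n - i div 2)) mod (4 * n) = 0" using \<open>even n\<close> by simp
        then show ?thesis by (rule that) (simp add: Bp_def)
      next
        case False
        obtain q where q: "i = 2 * q + 1" using False by (auto elim: oddE)
        have "i + 2 * (2 * n - 1 - i div 2) = 4 * n - 1" using q i by simp
        then have "(i + (if even n then 2 else 4) * (2 * n - 1 - i div 2)) mod (4 * n) = 4 * n - 1" using \<open>even n\<close> n by simp
        then show ?thesis by (rule that) (use \<open>even n\<close> in \<open>simp add: Bp_def\<close>)
      qed
    next
      case False
      have q1: "i div 4 < n" using i by auto
      have q2: "i = 4 * (i div 4) + i mod 4" by simp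
      have q3: "4 * (n - i div 4) = 4 * n - 4 * (i div 4)" by (simp add: diff_mult_distrib2)
      have "i + 4 * (n - i div 4) = 4 * n + i mod 4" using q1 q2 q3 by linarith
      then have "(i + (if even n then 2 else 4) * (n - i div 4)) mod (4 * n) = i mod 4" using False n by simp
      then show ?thesis by (rule that) (use False in \<open>simp add: Bp_def\<close>)
    qed
    have "\<beta> (i, 1) = \<beta> (r, 1)" using stepT[OF n z i, of t] tr by simp
    also have "\<dots> = 0" by (intro out) (use nb in \<open>simp add: Bset_def\<close>)
    finally show ?thesis using xe e1 by simp
  qed
qed

lemma SP_B:
  fixes n :: nat
  assumes n: "n \<ge> 1" and t: "t \<in> G n" and nt: "t \<notin> Bset n"
  shows "inn_der n (ga_elem t :: nat \<times> nat \<Rightarrow> 'a::field) \<in> module.span der_scale ((\<lambda>g. inn_der n (ga_elem g :: nat \<times> nat \<Rightarrow> 'a)) ` Bset n)"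
proof -
  obtain i e where te: "t = (i, e)" by fastforce
  have i: "i < 4 * n" "e < 2" using t te by (auto simp: sd_carrier_def)
  have nb: "\<not> Bp n (i, e)" using t nt te by (auto simp: Bset_def)
  obtain S where S: "S \<subseteq> G n" "t \<in> S" "S - {t} \<subseteq> Bset n"
    and inv: "\<And>a b c. a \<in> G n \<Longrightarrow> b \<in> G n \<Longrightarrow> c \<in> G n \<Longrightarrow> sd_mult n a b = sd_mult n c a \<Longrightarrow> (b \<in> S \<longleftrightarrow> c \<in> S)"
  proof (cases "e = 0")
    case True
    define j where "j = (i * (2 * n - 1)) mod (4 * n)"
    have j: "j < 4 * n" using n by (simp add: j_def)
    have "j = i \<or> Bp n (j, 0)" unfolding j_def by (rule BpB[OF n i(1)]) (use nb True in simp)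
    then have s3: "{(i, 0), (j, 0)} - {t} \<subseteq> Bset n" using j te True by (auto simp: Bset_def sd_carrier_def)
    have s1: "{(i, 0), (j, 0)} \<subseteq> G n" using i j by (auto simp: sd_carrier_def)
    have s2: "t \<in> {(i, 0), (j, 0)}" using te True by simp
    show ?thesis
    proof (rule that[OF s1 s2 s3])
      fix a b c assume "a \<in> G n" "b \<in> G n" "c \<in> G n" "sd_mult n a b = sd_mult n c a"
      then show "b \<in> {(i, 0), (j, 0)} \<longleftrightarrow> c \<in> {(i, 0), (j, 0)}" unfolding j_def by (rule S0_inv[OF n i(1)])
    qed
  next
    case False
    then have e1: "e = 1" using i by simp
    show ?thesis
    proof (cases "even n")
      case True
      define S where "S = {x \<in> G n. snd x = 1 \<and> fst x mod 2 = i mod 2}"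
      have u1: "[2 * n - 1 = 1] (mod 2)" using n by (cases n) (simp_all add: cong_def)
      have s3: "S - {t} \<subseteq> Bset n"
      proof
        fix x assume x: "x \<in> S - {t}"
        obtain j f where xf: "x = (j, f)" by fastforce
        have jj: "j < 4 * n" "f = 1" "j mod 2 = i mod 2" "j \<noteq> i" using x xf te e1 by (auto simp: S_def sd_carrier_def)
        have ni: "\<not> (1 \<le> i \<and> i + 2 \<le> 4 * n)" using nb e1 True by (simp add: Bp_def)
        have i01: "i = 0 \<or> i = 4 * n - 1" using ni i(1) by linarith
        have o4': "4 * n - 1 = 2 * (2 * n - 1) + 1" using n by simp
        have o4: "(4 * n - 1) mod 2 = 1" by (subst o4') simp
        have "1 \<le> j \<and> j + 2 \<le> 4 * n"
        proof (cases "i = 0")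
          case True
          then have "j \<noteq> 0" "j \<noteq> 4 * n - 1" using jj o4 by auto
          then show ?thesis using jj(1) by linarith
        next
          case False
          then have "i = 4 * n - 1" using i01 by simp
          then have "j \<noteq> 0" "j \<noteq> 4 * n - 1" using jj o4 by auto
          then show ?thesis using jj(1) by linarith
        qed
        then show "x \<in> Bset n" using jj xf True by (simp add: Bset_def Bp_def sd_carrier_def)
      qed
      have s1: "S \<subseteq> G n" by (auto simp: S_def)
      have s2: "t \<in> S" using t te e1 by (simp add: S_def)
      show ?thesis
      proof (rule that[OF s1 s2 s3])
        fix a b c assume abc: "a \<in> G n" "b \<in> G n" "c \<in> G n" "sd_mult n a b = sd_mult n c a"
        show "b \<in> S \<longleftrightarrow> c \<in> S" unfolding S_def by (rule Sd_inv[OF n _ u1 abc]) simp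
      qed
    next
      case False
      define S where "S = {x \<in> G n. snd x = 1 \<and> fst x mod 4 = i mod 4}"
      obtain m where m: "n = 2 * m + 1" using False by (auto elim: oddE)
      have u1: "[2 * n - 1 = 1] (mod 4)" using m by (simp add: cong_def)
      have s3: "S - {t} \<subseteq> Bset n"
      proof
        fix x assume x: "x \<in> S - {t}"
        obtain j f where xf: "x = (j, f)" by fastforce
        have jj: "j < 4 * n" "f = 1" "j mod 4 = i mod 4" "j \<noteq> i" using x xf te e1 by (auto simp: S_def sd_carrier_def)
        have ni: "i < 4" using nb e1 False by (simp add: Bp_def)
        have "4 \<le> j"
        proof (rule ccontr)
          assume "\<not> 4 \<le> j"
          then have "j mod 4 = j" by simp
          moreover have "i mod 4 = i" using ni by simp
          ultimately show False using jj by simp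
        qed
        then show "x \<in> Bset n" using jj xf False by (simp add: Bset_def Bp_def sd_carrier_def)
      qed
      have s1: "S \<subseteq> G n" by (auto simp: S_def)
      have s2: "t \<in> S" using t te e1 by (simp add: S_def)
      show ?thesis
      proof (rule that[OF s1 s2 s3])
        fix a b c assume abc: "a \<in> G n" "b \<in> G n" "c \<in> G n" "sd_mult n a b = sd_mult n c a"
        show "b \<in> S \<longleftrightarrow> c \<in> S" unfolding S_def by (rule Sd_inv[OF n _ u1 abc]) simp
      qed
    qed
  qed
  have fin: "finite S" using S(1) finite_G finite_subset by blast
  have z: "(\<Sum>s\<in>S. inn_der n (ga_elem s :: nat \<times> nat \<Rightarrow> 'a)) = 0" by (rule class_sum[OF n S(1) inv])
  show ?thesis
    by (rule span_from_class[OF vs_der fin S(2), where D = "\<lambda>g. inn_der n (ga_elem g :: nat \<times> nat \<Rightarrow> 'a)"])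
       (use z S(3) in simp_all)
qed

theorem theorem5p5:
  fixes n :: nat
  assumes "n \<ge> 1"
  shows "vector_space.dim (der_scale :: 'a::field \<Rightarrow> _) (Der_inn n :: (_ \<Rightarrow> (nat \<times> nat \<Rightarrow> 'a)) set)
           = (if even n then 3 * (2 * n - 1) else 6 * (n - 1))
       \<and> (even n \<longrightarrow>
            \<not> module.dependent (der_scale :: 'a \<Rightarrow> _) ((\<lambda>g. inn_der n (ga_elem g :: nat \<times> nat \<Rightarrow> 'a)) ` basis_even n)
          \<and> module.span (der_scale :: 'a \<Rightarrow> _) ((\<lambda>g. inn_der n (ga_elem g :: nat \<times> nat \<Rightarrow> 'a)) ` basis_even n)
              = Der_inn n)
       \<and> (odd n \<longrightarrow>
            \<not> module.dependent (der_scale :: 'a \<Rightarrow> _) ((\<lambda>g. inn_der n (ga_elem g :: nat \<times> nat \<Rightarrow> 'a)) ` basis_odd n)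
          \<and> module.span (der_scale :: 'a \<Rightarrow> _) ((\<lambda>g. inn_der n (ga_elem g :: nat \<times> nat \<Rightarrow> 'a)) ` basis_odd n)
              = Der_inn n)"
proof -
  have n: "n \<ge> 1" by (rule assms)
  have BG: "Bset n \<subseteq> G n" by (auto simp: Bset_def)
  have A: "\<not> module.dependent (der_scale :: 'a \<Rightarrow> _) ((\<lambda>g. inn_der n (ga_elem g :: nat \<times> nat \<Rightarrow> 'a)) ` Bset n)
     \<and> module.span (der_scale :: 'a \<Rightarrow> _) ((\<lambda>g. inn_der n (ga_elem g :: nat \<times> nat \<Rightarrow> 'a)) ` Bset n) = Der_inn n
     \<and> vector_space.dim (der_scale :: 'a \<Rightarrow> _) (Der_inn n :: (_ \<Rightarrow> (nat \<times> nat \<Rightarrow> 'a)) set) = card (Bset n)"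
    by (rule assemble[OF n BG]) (auto intro: KEY_B[OF n] SP_B[OF n])
  show ?thesis
  proof (cases "even n")
    case True
    have "basis_even n = Bset n" using basis_even_eq[OF True] by (simp add: Bset_def)
    moreover have "card (basis_even n) = 3 * (2 * n - 1)" by (rule card_even[OF n True])
    ultimately show ?thesis using A True by simp
  next
    case False
    have "basis_odd n = Bset n" using basis_odd_eq[OF False] by (simp add: Bset_def)
    moreover have "card (basis_odd n) = 6 * (n - 1)" by (rule card_odd[OF n False])
    ultimately show ?thesis using A False by simp
  qed
qed


end
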